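(* Both $S_A$ and $S_B$ are nonempty.
   Context: All graphs are finite and simple. A graph $G$ is a minimal prime graph complement if $G$ has at least $2$ vertices and: (1) the complement $\overline{G}$ is connected; (2) $G$ is triangle-free; (3) $G$ is $3$-colorable; (4) for any two distinct nonadjacent vertices $u,v$ of $G$, adding the edge $uv$ to $G$ yields a graph that either contains a triangle or is not $3$-colorable. Standing setup: $\Gamma$ is a minimal prime graph complement with a vertex $X$ of degree $2$, whose two neighbors are $A$ and $B$. Among the vertices of $\Gamma$ other than $X,A,B$: $S_A$ is the set of those adjacent to $A$ but not $B$; $S_B$ the set of those adjacent to $B$ but not $A$; $S_Y$ the set of those adjacent to both $A$ and $B$; $S_Z$ the set of those adjacent to neither $A$ nor $B$. *)

theory Defs
  imports Main
begin

definition simple_graph :: "'a set \<Rightarrow> ('a \<Rightarrow> 'a \<Rightarrow> bool) \<Rightarrow> bool" where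
  "simple_graph V E \<longleftrightarrow> finite V \<and> (\<forall>u v. E u v \<longrightarrow> u \<in> V \<and> v \<in> V)
     \<and> (\<forall>u v. E u v \<longrightarrow> E v u) \<and> (\<forall>u. \<not> E u u)"

definition compl_adj :: "'a set \<Rightarrow> ('a \<Rightarrow> 'a \<Rightarrow> bool) \<Rightarrow> 'a \<Rightarrow> 'a \<Rightarrow> bool" where
  "compl_adj V E u v \<longleftrightarrow> u \<in> V \<and> v \<in> V \<and> u \<noteq> v \<and> \<not> E u v"

definition connected_graph :: "'a set \<Rightarrow> ('a \<Rightarrow> 'a \<Rightarrow> bool) \<Rightarrow> bool" where
  "connected_graph V E \<longleftrightarrow> (\<forall>u\<in>V. \<forall>v\<in>V. (E\<^sup>*\<^sup>*) u v)"

definition triangle_free :: "'a set \<Rightarrow> ('a \<Rightarrow> 'a \<Rightarrow> bool) \<Rightarrow> bool" where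
  "triangle_free V E \<longleftrightarrow> \<not> (\<exists>x\<in>V. \<exists>y\<in>V. \<exists>z\<in>V. E x y \<and> E y z \<and> E x z)"

definition three_colorable :: "'a set \<Rightarrow> ('a \<Rightarrow> 'a \<Rightarrow> bool) \<Rightarrow> bool" where
  "three_colorable V E \<longleftrightarrow>
     (\<exists>c :: 'a \<Rightarrow> nat. (\<forall>v\<in>V. c v < 3) \<and> (\<forall>u\<in>V. \<forall>v\<in>V. E u v \<longrightarrow> c u \<noteq> c v))"

definition add_edge :: "('a \<Rightarrow> 'a \<Rightarrow> bool) \<Rightarrow> 'a \<Rightarrow> 'a \<Rightarrow> 'a \<Rightarrow> 'a \<Rightarrow> bool" where
  "add_edge E u v = (\<lambda>x y. E x y \<or> (x = u \<and> y = v) \<or> (x = v \<and> y = u))"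

definition minimal_prime_graph_complement :: "'a set \<Rightarrow> ('a \<Rightarrow> 'a \<Rightarrow> bool) \<Rightarrow> bool" where
  "minimal_prime_graph_complement V E \<longleftrightarrow>
     simple_graph V E \<and> card V \<ge> 2 \<and>
     connected_graph V (compl_adj V E) \<and>
     triangle_free V E \<and> three_colorable V E \<and>
     (\<forall>u\<in>V. \<forall>v\<in>V. u \<noteq> v \<and> \<not> E u v \<longrightarrow>
        \<not> triangle_free V (add_edge E u v) \<or> \<not> three_colorable V (add_edge E u v))"

definition nbhd :: "'a set \<Rightarrow> ('a \<Rightarrow> 'a \<Rightarrow> bool) \<Rightarrow> 'a \<Rightarrow> 'a set" where
  "nbhd V E x = {y \<in> V. E x y}"

end

theory Submission
  imports Defs
begin

lemma tf_add:
  assumes sg: "simple_graph V E" and tf: "triangle_free V E"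
    and nc: "\<forall>z. \<not> (E u z \<and> E v z)" and uv: "u \<noteq> v"
  shows "triangle_free V (add_edge E u v)"
proof -
  have sym: "\<And>a b. E a b \<Longrightarrow> E b a" using sg unfolding simple_graph_def by blast
  have irr: "\<And>a. \<not> E a a" using sg unfolding simple_graph_def by blast
  show ?thesis
    unfolding triangle_free_def add_edge_def
  proof (intro notI, elim bexE conjE)
    fix x y z assume V: "x \<in> V" "y \<in> V" "z \<in> V"
      and h: "E x y \<or> x = u \<and> y = v \<or> x = v \<and> y = u"
        "E y z \<or> y = u \<and> z = v \<or> y = v \<and> z = u"
        "E x z \<or> x = u \<and> z = v \<or> x = v \<and> z = u"
    show False
      using h apply (elim disjE conjE)
      using tf V unfolding triangle_free_def apply blast
      apply (auto dest: sym simp: irr uv)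
      using nc sym uv by blast+
  qed
qed

lemma half:
  fixes V :: "'a set" and E :: "'a \<Rightarrow> 'a \<Rightarrow> bool" and X A B :: 'a
  assumes mp: "minimal_prime_graph_complement V E"
    and XV: "X \<in> V"
    and nb: "nbhd V E X = {A, B}" and AB: "A \<noteq> B"
    and SA: "{v \<in> V - {X, A, B}. E v A \<and> \<not> E v B} = {}"
  shows False
proof -
  have sg: "simple_graph V E" and tf: "triangle_free V E" and col: "three_colorable V E"
    and conn: "connected_graph V (compl_adj V E)"
    and minl: "\<forall>u\<in>V. \<forall>v\<in>V. u \<noteq> v \<and> \<not> E u v \<longrightarrow>
        \<not> triangle_free V (add_edge E u v) \<or> \<not> three_colorable V (add_edge E u v)"
    using mp unfolding minimal_prime_graph_complement_def by auto
  have sym: "\<And>a b. E a b \<Longrightarrow> E b a" and irr: "\<And>a. \<not> E a a"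
    and inV: "\<And>a b. E a b \<Longrightarrow> a \<in> V \<and> b \<in> V"
    using sg unfolding simple_graph_def by blast+
  have nbX: "\<And>y. E X y \<longleftrightarrow> y = A \<or> y = B"
    using nb inV unfolding nbhd_def by blast
  have XA: "E X A" and XB: "E X B" using nbX by auto
  have AV: "A \<in> V" and BV: "B \<in> V" using inV XA XB by auto
  have AX: "A \<noteq> X" and BX: "B \<noteq> X" using XA XB irr by auto
  have nAB: "\<not> E A B" using tf XA XB XV AV BV unfolding triangle_free_def by blast
  have SA': "\<And>v. E v A \<Longrightarrow> E v B"
  proof -
    fix v assume "E v A"
    then show "E v B" using SA inV XB sym irr nAB by (cases "v = X \<or> v = B"; blast)
  qed
  obtain c0 :: "'a \<Rightarrow> nat" where c0: "\<forall>v\<in>V. c0 v < 3" "\<forall>u\<in>V. \<forall>v\<in>V. E u v \<longrightarrow> c0 u \<noteq> c0 v"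
    using col unfolding three_colorable_def by blast
  define c1 where "c1 = c0(A := c0 B)"
  have c1a: "\<forall>v\<in>V. c1 v < 3" using c0 BV unfolding c1_def by auto
  have c1b: "\<forall>u\<in>V. \<forall>v\<in>V. E u v \<longrightarrow> c1 u \<noteq> c1 v"
  proof (intro ballI impI)
    fix u v assume uv: "u \<in> V" "v \<in> V" "E u v"
    show "c1 u \<noteq> c1 v"
    proof (cases "u = A")
      case True
      then have "v \<noteq> A" using uv irr by blast
      moreover have "E v B" using SA' sym uv True by blast
      moreover have "c0 v \<noteq> c0 B" using c0(2) uv(2) BV \<open>E v B\<close> by blast
      ultimately show ?thesis using True unfolding c1_def by simp
    next
      case False
      show ?thesis
      proof (cases "v = A")
        case True
        moreover have "E u B" using SA' sym uv True by blast
        moreover have "c0 u \<noteq> c0 B" using c0(2) uv(1) BV \<open>E u B\<close> by blast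
        ultimately show ?thesis using False unfolding c1_def by simp
      next
        case F2: False
        then show ?thesis using False c0(2) uv unfolding c1_def by simp
      qed
    qed
  qed
  have cl1: "E v B" if vV: "v \<in> V" "v \<noteq> A" "v \<noteq> B" for v
  proof (cases "v = X")
    case True then show ?thesis using XB by simp
  next
    case False
    show ?thesis
    proof (rule ccontr)
      assume nvB: "\<not> E v B"
      then have nvA: "\<not> E v A" using SA' by blast
      have nXv: "\<not> E X v" using nbX vV by auto
      have "triangle_free V (add_edge E X v)"
      proof (rule tf_add[OF sg tf])
        show "\<forall>z. \<not> (E X z \<and> E v z)"
        proof (intro allI notI)
          fix z assume "E X z \<and> E v z"
          then have "z = A \<or> z = B" "E v z" using nbX by auto
          then show False using nvA nvB by blast
        qed
      qed (use False in simp)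
      moreover have "three_colorable V (add_edge E X v)"
      proof -
        define c2 where "c2 = c1(X := (if c1 A \<noteq> 0 \<and> c1 v \<noteq> 0 then 0
              else if c1 A \<noteq> 1 \<and> c1 v \<noteq> 1 then 1 else 2))"
        have "c1 A = c1 B" unfolding c1_def using AB by simp
        have a: "\<forall>u\<in>V. c2 u < 3" using c1a unfolding c2_def by auto
        have b: "c2 X \<noteq> c1 A" "c2 X \<noteq> c1 v" unfolding c2_def by auto
        have nbX': "y = A \<or> y = B" if "E y X" for y using nbX sym[OF that] by simp
        have oth: "\<And>u. u \<noteq> X \<Longrightarrow> c2 u = c1 u" unfolding c2_def by simp
        have "c2 u \<noteq> c2 w" if uw: "u \<in> V" "w \<in> V" "add_edge E X v u w" for u w
        proof -
          have "E u w \<or> u = X \<and> w = v \<or> u = v \<and> w = X" using uw(3) unfolding add_edge_def .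
          then show ?thesis
          proof (elim disjE conjE)
            assume e: "E u w"
            show ?thesis
            proof (cases "u = X")
              case True
              then have "w = A \<or> w = B" using nbX e by blast
              then show ?thesis using True b oth AX BX `c1 A = c1 B` by metis
            next
              case False
              show ?thesis
              proof (cases "w = X")
                case True
                then have "u = A \<or> u = B" using nbX' e by blast
                then show ?thesis using True b oth AX BX `c1 A = c1 B` by metis
              next
                case F2: False
                then show ?thesis using False oth c1b uw e by metis
              qed
            qed
          next
            assume "u = X" "w = v" then show ?thesis using b oth False by metis
          next
            assume "u = v" "w = X" then show ?thesis using b oth False by metis
          qed
        qed
        then have "\<forall>u\<in>V. \<forall>w\<in>V. add_edge E X v u w \<longrightarrow> c2 u \<noteq> c2 w" by blast
        then show ?thesis using a unfolding three_colorable_def by blast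
      qed
      moreover have "X \<noteq> v" using False by simp
      ultimately show False using minl[rule_format, OF XV vV(1)] nXv by blast
    qed
  qed
  have indep: "\<not> E u w" if "u \<in> V" "w \<in> V" "u \<noteq> A" "u \<noteq> B" "w \<noteq> A" "w \<noteq> B" for u w
  proof
    assume "E u w"
    moreover have "E u B" "E w B" using cl1 that by auto
    ultimately show False using tf that(1,2) BV unfolding triangle_free_def by (meson sym)
  qed
  have cl2: "E w A" if wV: "w \<in> V" "w \<noteq> A" "w \<noteq> B" for w
  proof (rule ccontr)
    assume nwA: "\<not> E w A"
    have "triangle_free V (add_edge E A w)"
    proof (rule tf_add[OF sg tf])
      show "\<forall>z. \<not> (E A z \<and> E w z)"
      proof (intro allI notI)
        fix z assume "E A z \<and> E w z"
        then have z: "E A z" "E w z" by auto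
        have "z \<noteq> A" using z irr by blast
        moreover have "z \<noteq> B" using z nAB by blast
        moreover have "z \<in> V" using z inV by blast
        ultimately show False using indep[of w z] wV z by blast
      qed
    qed (use wV in auto)
    moreover have "three_colorable V (add_edge E A w)"
    proof -
      define c where "c = (\<lambda>x. if x = A \<or> x = B then (0::nat) else 1)"
      have "c u \<noteq> c v" if "u \<in> V" "v \<in> V" "add_edge E A w u v" for u v
      proof -
        have "E u v \<or> u = A \<and> v = w \<or> u = w \<and> v = A" using that(3) unfolding add_edge_def .
        then show ?thesis
        proof (elim disjE)
          assume e: "E u v"
          show ?thesis
          proof (cases "u = A \<or> u = B")
            case True
            then have "v \<noteq> A \<and> v \<noteq> B" using e nAB irr sym by blast
            then show ?thesis using True unfolding c_def by auto
          next
            case False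
            then have "v = A \<or> v = B" using indep[of u v] that(1,2) e by blast
            then show ?thesis using False unfolding c_def by auto
          qed
        qed (use wV in \<open>auto simp: c_def\<close>)
      qed
      then have "\<forall>u\<in>V. \<forall>v\<in>V. add_edge E A w u v \<longrightarrow> c u \<noteq> c v" by blast
      moreover have "\<forall>u\<in>V. c u < 3" unfolding c_def by simp
      ultimately show ?thesis unfolding three_colorable_def by blast
    qed
    moreover have "A \<noteq> w" "\<not> E A w" using wV nwA sym by auto
    ultimately show False using minl[rule_format, OF AV wV(1)] by blast
  qed
  have "(compl_adj V E)\<^sup>*\<^sup>* A X" using conn AV XV unfolding connected_graph_def by blast
  then have "X \<in> {A, B}"
  proof (induction rule: rtranclp_induct)
    case base then show ?case by simp
  next
    case (step y z)
    then have y: "y = A \<or> y = B" and z: "z \<in> V" "y \<noteq> z" "\<not> E y z"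
      unfolding compl_adj_def by auto
    show ?case
    proof (rule ccontr)
      assume "z \<notin> {A, B}"
      then have "E z A" "E z B" using cl1 cl2 z(1) by auto
      then show False using y z sym by blast
    qed
  qed
  then show False using AX BX by auto
qed

theorem lemma12:
  fixes V :: "'a set" and E :: "'a \<Rightarrow> 'a \<Rightarrow> bool" and X A B :: 'a
  assumes "minimal_prime_graph_complement V E"
    and "X \<in> V"
    and "nbhd V E X = {A, B}" and "A \<noteq> B"
  shows "{v \<in> V - {X, A, B}. E v A \<and> \<not> E v B} \<noteq> {}
       \<and> {v \<in> V - {X, A, B}. E v B \<and> \<not> E v A} \<noteq> {}"
proof
  show "{v \<in> V - {X, A, B}. E v A \<and> \<not> E v B} \<noteq> {}"
    using half[OF assms] by blast
  have nb: "nbhd V E X = {B, A}" using assms(3) by auto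
  have "{v \<in> V - {X, B, A}. E v B \<and> \<not> E v A} \<noteq> {}"
  proof
    assume "{v \<in> V - {X, B, A}. E v B \<and> \<not> E v A} = {}"
    then show False using half[OF assms(1,2) nb assms(4)[symmetric]] by blast
  qed
  then show "{v \<in> V - {X, A, B}. E v B \<and> \<not> E v A} \<noteq> {}"
    by (simp add: insert_commute)
qed

end
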